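(* Let $(M,\Sigma)$ be a measurable space, $r\ge1$, and $\mu_1,\dots,\mu_r$ non-atomic countably additive finite (nonnegative) measures on $\Sigma$. Then for every measurable set $S$ and every index $k\in\{1,\dots,r\}$ there is a measurable subset $H\subseteq S$ with $\mu_k(H)\ge 2^{-(r-1)}\mu_k(S)$ on which there exists a strong solution, i.e. a partition $H=F_1\sqcup\dots\sqcup F_r$ into measurable sets with $\mu_i(F_i)\ge\mu_i(F_j)$ for all $i,j$.
   Context: Partition elements may be empty. A measure is non-atomic if every measurable set of positive measure contains a measurable subset of strictly smaller positive measure. *)

theory Defs
  imports "HOL-Analysis.Analysis"
begin

definition non_atomic :: "'a measure \<Rightarrow> bool" where
  "non_atomic N \<longleftrightarrow>
     (\<forall>A \<in> sets N. 0 < emeasure N A \<longrightarrow>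
        (\<exists>B \<in> sets N. B \<subseteq> A \<and> 0 < emeasure N B \<and> emeasure N B < emeasure N A))"

end

theory Submission
  imports Defs
begin


lemma na_real:
  assumes fm: "finite_measure N" and na: "non_atomic N" and A: "A \<in> sets N" and pos: "0 < measure N A"
  shows "\<exists>B\<in>sets N. B \<subseteq> A \<and> 0 < measure N B \<and> measure N B < measure N A"
proof -
  interpret finite_measure N by fact
  have "0 < emeasure N A" using pos A by (simp add: emeasure_eq_measure)
  then obtain B where B: "B \<in> sets N" "B \<subseteq> A" "0 < emeasure N B" "emeasure N B < emeasure N A"
    using na A unfolding non_atomic_def by blast
  then show ?thesis using A by (auto simp: emeasure_eq_measure ennreal_less_iff intro!: bexI[of _ B])
qed

lemma na_half:
  assumes fm: "finite_measure N" and na: "non_atomic N" and A: "A \<in> sets N" and pos: "0 < measure N A"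
  shows "\<exists>B\<in>sets N. B \<subseteq> A \<and> 0 < measure N B \<and> measure N B \<le> measure N A / 2"
proof -
  interpret finite_measure N by fact
  obtain B where B: "B \<in> sets N" "B \<subseteq> A" "0 < measure N B" "measure N B < measure N A"
    using na_real[OF assms] by blast
  have D: "measure N (A - B) = measure N A - measure N B" using A B by (simp add: finite_measure_Diff)
  show ?thesis
  proof (cases "measure N B \<le> measure N A / 2")
    case True then show ?thesis using B by blast
  next
    case False then show ?thesis using B D A by (intro bexI[of _ "A - B"]) auto
  qed
qed

lemma na_small:
  assumes fm: "finite_measure N" and na: "non_atomic N" and A: "A \<in> sets N" and pos: "0 < measure N A"
    and e: "0 < e"
  shows "\<exists>E\<in>sets N. E \<subseteq> A \<and> 0 < measure N E \<and> measure N E < e"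
proof -
  have all: "\<exists>E\<in>sets N. E \<subseteq> A \<and> 0 < measure N E \<and> measure N E * 2^m \<le> measure N A" for m
  proof (induction m)
    case 0 then show ?case using A pos by auto
  next
    case (Suc m)
    then obtain E where E: "E\<in>sets N" "E \<subseteq> A" "0 < measure N E" "measure N E * 2^m \<le> measure N A" by blast
    obtain B where BB: "B\<in>sets N" "B \<subseteq> E" "0 < measure N B" "measure N B \<le> measure N E / 2"
      using na_half[OF fm na E(1,3)] by blast
    have b2: "2 * measure N B \<le> measure N E" using BB(4) by simp
    have h1: "(2 * measure N B) * 2^m \<le> measure N E * 2^m"
      by (rule mult_right_mono[OF b2]) simp
    have eq: "measure N B * 2^Suc m = (2 * measure N B) * 2^m" by simp
    have "measure N B * 2^Suc m \<le> measure N A" unfolding eq using h1 E(4) by (rule order_trans)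
    then show ?case using E BB by (intro bexI[of _ B]) auto
  qed
  obtain m where m: "(1/2::real)^m < e / measure N A" using real_arch_pow_inv[of "e / measure N A" "1/2"] e pos by auto
  then have "measure N A < e * 2^m" using pos by (simp add: field_simps power_divide)
  then show ?thesis using all[of m]
    by (metis dual_order.strict_trans2 linorder_not_le mult_right_mono zero_le_numeral zero_le_power)
qed

lemma sierpinski:
  assumes fm: "finite_measure N" and na: "non_atomic N" and U: "U \<in> sets N" and c: "0 \<le> c" "c \<le> measure N U"
  shows "\<exists>Z\<in>sets N. Z \<subseteq> U \<and> measure N Z = c"
proof -
  interpret finite_measure N by fact
  define cand where "cand B = {C \<in> sets N. C \<subseteq> U - B \<and> measure N B + measure N C \<le> c}" for B
  define s where "s B = Sup (measure N ` cand B)" for B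
  have bdd: "bdd_above (measure N ` cand B)" for B
    by (rule bdd_aboveI[of _ "measure N (space N)"]) (auto simp: cand_def intro!: bounded_measure)
  have ex: "\<exists>C. C \<in> cand B \<and> s B \<le> 2 * measure N C" if "measure N B \<le> c" for B
  proof -
    have ne: "{} \<in> cand B" using that by (auto simp: cand_def)
    show ?thesis
    proof (cases "s B \<le> 0")
      case True then show ?thesis using ne by auto
    next
      case False
      then have "s B / 2 < Sup (measure N ` cand B)" by (simp add: s_def)
      then obtain x where "x \<in> measure N ` cand B" "s B / 2 < x"
        using less_cSup_iff[OF _ bdd] ne by blast
      then show ?thesis by force
    qed
  qed
  define g where "g B = (SOME C. C \<in> cand B \<and> s B \<le> 2 * measure N C)" for B
  have g: "g B \<in> cand B \<and> s B \<le> 2 * measure N (g B)" if "measure N B \<le> c" for B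
    unfolding g_def by (rule someI_ex) (rule ex[OF that])
  define Bs where "Bs m = ((\<lambda>B. B \<union> g B) ^^ m) {}" for m
  have Bs_Suc: "Bs (Suc m) = Bs m \<union> g (Bs m)" for m by (simp add: Bs_def)
  have inv: "Bs m \<in> sets N \<and> Bs m \<subseteq> U \<and> measure N (Bs m) \<le> c
     \<and> measure N (Bs (Suc m)) = measure N (Bs m) + measure N (g (Bs m))" for m
  proof (induction m)
    case 0
    have G: "g {} \<in> cand {}" using g[of "{}"] c by simp
    then show ?case using c U by (auto simp: Bs_def cand_def)
  next
    case (Suc m)
    then have G: "g (Bs m) \<in> cand (Bs m)" using g by blast
    have S1: "Bs (Suc m) \<in> sets N" "Bs (Suc m) \<subseteq> U" "measure N (Bs (Suc m)) \<le> c"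
      using G Suc by (auto simp: Bs_Suc cand_def)
    have G2: "g (Bs (Suc m)) \<in> cand (Bs (Suc m))" using g S1 by blast
    have "measure N (Bs (Suc (Suc m))) = measure N (Bs (Suc m)) + measure N (g (Bs (Suc m)))"
      unfolding Bs_Suc[of "Suc m"] using G2 S1 by (intro finite_measure_Union) (auto simp: cand_def)
    with S1 show ?case by blast
  qed
  have gm: "s (Bs m) \<le> 2 * measure N (g (Bs m))" for m using g inv by blast
  have inc: "incseq Bs" by (rule incseq_SucI) (simp add: Bs_Suc)
  define B where "B = (\<Union>m. Bs m)"
  have B: "B \<in> sets N" "B \<subseteq> U" using inv unfolding B_def by auto
  have lim: "(\<lambda>m. measure N (Bs m)) \<longlonglongrightarrow> measure N B"
    unfolding B_def using inv inc by (intro finite_Lim_measure_incseq) auto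
  have Bc: "measure N B \<le> c" by (rule LIMSEQ_le_const2[OF lim]) (use inv in auto)
  show ?thesis
  proof (cases "measure N B = c")
    case True with B show ?thesis by blast
  next
    case False
    then have lt: "measure N B < c" using Bc by simp
    have "measure N (U - B) = measure N U - measure N B" using B U by (simp add: finite_measure_Diff)
    then have pos: "0 < measure N (U - B)" using lt c by simp
    obtain E where E: "E \<in> sets N" "E \<subseteq> U - B" "0 < measure N E" "measure N E < c - measure N B"
      using na_small[OF fm na _ pos, of "c - measure N B"] U B lt by auto
    have le: "measure N E \<le> 2 * (measure N (Bs (Suc m)) - measure N (Bs m))" for m
    proof -
      have sub: "Bs m \<subseteq> B" unfolding B_def by auto
      then have "measure N (Bs m) \<le> measure N B" using B by (intro finite_measure_mono) auto
      then have "E \<in> cand (Bs m)" using E sub by (auto simp: cand_def)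
      then have "measure N E \<le> s (Bs m)" unfolding s_def by (intro cSup_upper bdd) auto
      then show ?thesis using gm[of m] inv[of m] by simp
    qed
    have "(\<lambda>m. 2 * (measure N (Bs (Suc m)) - measure N (Bs m))) \<longlonglongrightarrow> 2 * (measure N B - measure N B)"
      by (intro tendsto_intros lim LIMSEQ_Suc)
    then have "measure N E \<le> 2 * (measure N B - measure N B)"
      by (rule LIMSEQ_le_const) (use le in auto)
    with E show ?thesis by simp
  qed
qed



lemma fm_add: "finite_measure N \<Longrightarrow> sets N = sets M \<Longrightarrow> A \<in> sets M \<Longrightarrow> B \<in> sets M \<Longrightarrow> A \<inter> B = {}
   \<Longrightarrow> measure N (A \<union> B) = measure N A + measure N B"
  by (metis finite_measure.finite_measure_Union)
lemma fm_diff: "finite_measure N \<Longrightarrow> sets N = sets M \<Longrightarrow> A \<in> sets M \<Longrightarrow> B \<in> sets M \<Longrightarrow> B \<subseteq> A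
   \<Longrightarrow> measure N (A - B) = measure N A - measure N B"
  by (metis finite_measure.finite_measure_Diff)
lemma fm_mono: "finite_measure N \<Longrightarrow> sets N = sets M \<Longrightarrow> B \<in> sets M \<Longrightarrow> A \<subseteq> B
   \<Longrightarrow> measure N A \<le> measure N B"
  by (metis finite_measure.finite_measure_mono)

lemma PB:
  fixes M :: "'a measure" and mu :: "nat \<Rightarrow> 'a measure"
  assumes "finite I" and "\<And>i. i\<in>I \<Longrightarrow> sets (mu i) = sets M \<and> finite_measure (mu i) \<and> non_atomic (mu i)"
  shows "\<forall>S\<in>sets M. \<exists>A\<in>sets M. A \<subseteq> S \<and> (\<forall>i\<in>I. measure (mu i) A = measure (mu i) S / 2)"
  using assms
proof (induction I rule: finite_induct)
  case empty then show ?case by auto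
next
  case (insert j I)
  have hyp: "\<And>i. i\<in>I \<Longrightarrow> sets (mu i) = sets M \<and> finite_measure (mu i) \<and> non_atomic (mu i)"
    using insert.prems by auto
  have IH: "\<forall>S\<in>sets M. \<exists>A\<in>sets M. A \<subseteq> S \<and> (\<forall>i\<in>I. measure (mu i) A = measure (mu i) S / 2)"
    using insert.IH hyp by blast
  then obtain h where h: "\<And>S. S \<in> sets M \<Longrightarrow> h S \<in> sets M \<and> h S \<subseteq> S \<and> (\<forall>i\<in>I. measure (mu i) (h S) = measure (mu i) S / 2)"
    by metis
  define \<nu> where "\<nu> = mu j"
  have \<nu>: "sets \<nu> = sets M" "finite_measure \<nu>" "non_atomic \<nu>" using insert.prems unfolding \<nu>_def by auto
  have mI: "sets (mu i) = sets M" "finite_measure (mu i)" if "i \<in> I" for i using hyp that by auto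
  show ?case
  proof
    fix S assume S: "S \<in> sets M"
    define c where "c = measure \<nu> S / 2"
    define step where "step = (\<lambda>(K,U,W). if measure \<nu> (K \<union> h U \<union> h W) \<le> c
        then (K \<union> h U, U - h U, h W) else (K \<union> h W, h U, W - h W))"
    define A0 where "A0 = h S"
    have A0: "A0 \<in> sets M" "A0 \<subseteq> S" "\<forall>i\<in>I. measure (mu i) A0 = measure (mu i) S / 2"
      using h[OF S] unfolding A0_def by auto
    define U0 where "U0 = (if c \<le> measure \<nu> A0 then A0 else S - A0)"
    define W0 where "W0 = (if c \<le> measure \<nu> A0 then S - A0 else A0)"
    define inv where "inv m = (\<lambda>(K,U,W). K \<in> sets M \<and> U \<in> sets M \<and> W \<in> sets M \<and>
       K \<inter> U = {} \<and> K \<inter> W = {} \<and> U \<inter> W = {} \<and> K \<union> U \<union> W \<subseteq> S \<and>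
       (\<forall>i\<in>I. measure (mu i) U = measure (mu i) S / 2^(Suc m) \<and> measure (mu i) W = measure (mu i) S / 2^(Suc m)
          \<and> measure (mu i) K + measure (mu i) U = measure (mu i) S / 2) \<and>
       c \<le> measure \<nu> K + measure \<nu> U \<and> measure \<nu> K + measure \<nu> W \<le> c)" for m
    have inv0: "inv 0 ({}, U0, W0)"
    proof -
      have d: "measure \<nu> (S - A0) = measure \<nu> S - measure \<nu> A0"
        using fm_diff[OF \<nu>(2,1) S A0(1,2)] .
      have di: "measure (mu i) (S - A0) = measure (mu i) S / 2" if "i \<in> I" for i
        using fm_diff[OF mI(2,1)[OF that] S A0(1,2)] A0(3) that by simp
      show ?thesis using A0 S d di unfolding inv_def U0_def W0_def c_def by auto
    qed
    have step_ok: "inv (Suc m) (step (K,U,W)) \<and> K \<subseteq> fst (step (K,U,W)) \<and> fst (snd (step (K,U,W))) \<subseteq> U"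
      if I0: "inv m (K,U,W)" for m K U W
    proof -
      from I0 have KUW: "K \<in> sets M" "U \<in> sets M" "W \<in> sets M" "K \<inter> U = {}" "K \<inter> W = {}" "U \<inter> W = {}"
        "K \<union> U \<union> W \<subseteq> S" and cK: "c \<le> measure \<nu> K + measure \<nu> U" "measure \<nu> K + measure \<nu> W \<le> c"
        and mi: "\<And>i. i\<in>I \<Longrightarrow> measure (mu i) U = measure (mu i) S / 2^(Suc m) \<and> measure (mu i) W = measure (mu i) S / 2^(Suc m)
          \<and> measure (mu i) K + measure (mu i) U = measure (mu i) S / 2"
        unfolding inv_def by auto
      have hU: "h U \<in> sets M" "h U \<subseteq> U" "\<And>i. i\<in>I \<Longrightarrow> measure (mu i) (h U) = measure (mu i) U / 2" using h[OF KUW(2)] by auto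
      have hW: "h W \<in> sets M" "h W \<subseteq> W" "\<And>i. i\<in>I \<Longrightarrow> measure (mu i) (h W) = measure (mu i) W / 2" using h[OF KUW(3)] by auto
      have UmhU: "U - h U \<in> sets M" "W - h W \<in> sets M" using hU hW KUW by auto
      note add\<nu> = fm_add[OF \<nu>(2,1)] and diff\<nu> = fm_diff[OF \<nu>(2,1)]
      have dU: "measure (mu i) (U - h U) = measure (mu i) U / 2" if "i\<in>I" for i
        using fm_diff[OF mI(2,1)[OF that] KUW(2) hU(1,2)] hU(3)[OF that] by simp
      have dW: "measure (mu i) (W - h W) = measure (mu i) W / 2" if "i\<in>I" for i
        using fm_diff[OF mI(2,1)[OF that] KUW(3) hW(1,2)] hW(3)[OF that] by simp
      have aKU: "measure (mu i) (K \<union> h U) = measure (mu i) K + measure (mu i) (h U)" if "i\<in>I" for i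
        using fm_add[OF mI(2,1)[OF that] KUW(1) hU(1)] KUW hU by auto
      have aKW: "measure (mu i) (K \<union> h W) = measure (mu i) K + measure (mu i) (h W)" if "i\<in>I" for i
        using fm_add[OF mI(2,1)[OF that] KUW(1) hW(1)] KUW hW by auto
      have nKU: "measure \<nu> (K \<union> h U) = measure \<nu> K + measure \<nu> (h U)"
        using add\<nu>[OF KUW(1) hU(1)] KUW hU by auto
      have nKW: "measure \<nu> (K \<union> h W) = measure \<nu> K + measure \<nu> (h W)"
        using add\<nu>[OF KUW(1) hW(1)] KUW hW by auto
      have nM: "measure \<nu> (K \<union> h U \<union> h W) = measure \<nu> K + measure \<nu> (h U) + measure \<nu> (h W)"
      proof -
        have "(K \<union> h U) \<inter> h W = {}" using KUW hU(2) hW(2) by blast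
        then show ?thesis using add\<nu>[of "K \<union> h U" "h W"] KUW hU hW nKU by auto
      qed
      have ndU: "measure \<nu> (U - h U) = measure \<nu> U - measure \<nu> (h U)" using diff\<nu>[OF KUW(2) hU(1,2)] .
      have ndW: "measure \<nu> (W - h W) = measure \<nu> W - measure \<nu> (h W)" using diff\<nu>[OF KUW(3) hW(1,2)] .
      show ?thesis
      proof (cases "measure \<nu> (K \<union> h U \<union> h W) \<le> c")
        case True
        have st: "step (K,U,W) = (K \<union> h U, U - h U, h W)" using True by (simp add: step_def)
        have "measure (mu i) (U - h U) = measure (mu i) S / 2^(Suc (Suc m)) \<and> measure (mu i) (h W) = measure (mu i) S / 2^(Suc (Suc m))
          \<and> measure (mu i) (K \<union> h U) + measure (mu i) (U - h U) = measure (mu i) S / 2" if i: "i \<in> I" for i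
        proof -
          have u: "measure (mu i) U = measure (mu i) S / 2^Suc m" and w: "measure (mu i) W = measure (mu i) S / 2^Suc m"
            and k: "measure (mu i) K + measure (mu i) U = measure (mu i) S / 2" using mi[OF i] by auto
          have q: "\<And>x::real. x / 2^Suc m / 2 = x / 2^Suc (Suc m)" by simp
          have c1: "measure (mu i) (U - h U) = measure (mu i) S / 2^Suc (Suc m)" by (simp only: dU[OF i] u q)
          have c2: "measure (mu i) (h W) = measure (mu i) S / 2^Suc (Suc m)" by (simp only: hW(3)[OF i] w q)
          have c3: "measure (mu i) (K \<union> h U) + measure (mu i) (U - h U) = measure (mu i) S / 2"
            unfolding aKU[OF i] dU[OF i] hU(3)[OF i] using k by linarith
          show ?thesis using c1 c2 c3 by blast
        qed
        note ii = this
        have nu1: "c \<le> measure \<nu> (K \<union> h U) + measure \<nu> (U - h U)" using nKU ndU cK by linarith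
        have nu2: "measure \<nu> (K \<union> h U) + measure \<nu> (h W) \<le> c" using nM nKU True by linarith
        have ss: "K \<union> h U \<in> sets M" "U - h U \<in> sets M" "h W \<in> sets M" using KUW hU hW by auto
        have dd: "(K \<union> h U) \<inter> (U - h U) = {}" "(K \<union> h U) \<inter> h W = {}" "(U - h U) \<inter> h W = {}"
          "(K \<union> h U) \<union> (U - h U) \<union> h W \<subseteq> S" "K \<subseteq> K \<union> h U" "U - h U \<subseteq> U"
          using KUW hU hW by blast+
        show ?thesis unfolding st inv_def prod.case fst_conv snd_conv using ii nu1 nu2 ss dd by blast
      next
        case False
        have st: "step (K,U,W) = (K \<union> h W, h U, W - h W)" using False by (simp add: step_def)
        have "measure (mu i) (h U) = measure (mu i) S / 2^(Suc (Suc m)) \<and> measure (mu i) (W - h W) = measure (mu i) S / 2^(Suc (Suc m))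
          \<and> measure (mu i) (K \<union> h W) + measure (mu i) (h U) = measure (mu i) S / 2" if i: "i \<in> I" for i
        proof -
          have u: "measure (mu i) U = measure (mu i) S / 2^Suc m" and w: "measure (mu i) W = measure (mu i) S / 2^Suc m"
            and k: "measure (mu i) K + measure (mu i) U = measure (mu i) S / 2" using mi[OF i] by auto
          have q: "\<And>x::real. x / 2^Suc m / 2 = x / 2^Suc (Suc m)" by simp
          have c1: "measure (mu i) (h U) = measure (mu i) S / 2^Suc (Suc m)" by (simp only: hU(3)[OF i] u q)
          have c2: "measure (mu i) (W - h W) = measure (mu i) S / 2^Suc (Suc m)" by (simp only: dW[OF i] w q)
          have c3: "measure (mu i) (K \<union> h W) + measure (mu i) (h U) = measure (mu i) S / 2"
            unfolding aKW[OF i] hW(3)[OF i] hU(3)[OF i] using k u w by linarith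
          show ?thesis using c1 c2 c3 by blast
        qed
        note ii = this
        have nu1: "c \<le> measure \<nu> (K \<union> h W) + measure \<nu> (h U)" using nKW nM False by linarith
        have nu2: "measure \<nu> (K \<union> h W) + measure \<nu> (W - h W) \<le> c" using nKW ndW cK by linarith
        have ss: "K \<union> h W \<in> sets M" "h U \<in> sets M" "W - h W \<in> sets M" using KUW hU hW by auto
        have dd: "(K \<union> h W) \<inter> h U = {}" "(K \<union> h W) \<inter> (W - h W) = {}" "h U \<inter> (W - h W) = {}"
          "(K \<union> h W) \<union> h U \<union> (W - h W) \<subseteq> S" "K \<subseteq> K \<union> h W" "h U \<subseteq> U"
          using KUW hU hW by blast+
        show ?thesis unfolding st inv_def prod.case fst_conv snd_conv using ii nu1 nu2 ss dd by blast
      qed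
    qed
    define st where "st m = (step ^^ m) ({}, U0, W0)" for m
    define K where "K m = fst (st m)" for m
    define U where "U m = fst (snd (st m))" for m
    define W where "W m = snd (snd (st m))" for m
    have stK: "st m = (K m, U m, W m)" for m by (simp add: K_def U_def W_def)
    have invm: "inv m (K m, U m, W m)" for m
    proof (induction m)
      case 0 then show ?case using inv0 by (simp add: K_def U_def W_def st_def)
    next
      case (Suc m)
      have "st (Suc m) = step (st m)" by (simp add: st_def)
      then show ?case using step_ok[OF Suc] stK by (metis)
    qed
    have monoK: "K m \<subseteq> K (Suc m)" and monoU: "U (Suc m) \<subseteq> U m" for m
    proof -
      have "st (Suc m) = step (st m)" by (simp add: st_def)
      then show "K m \<subseteq> K (Suc m)" "U (Suc m) \<subseteq> U m" using step_ok[OF invm[of m]] stK by (metis fst_conv snd_conv)+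
    qed
    have invs: "K m \<in> sets M \<and> U m \<in> sets M \<and> W m \<in> sets M \<and> K m \<inter> U m = {} \<and> K m \<union> U m \<union> W m \<subseteq> S \<and>
       (\<forall>i\<in>I. measure (mu i) (U m) = measure (mu i) S / 2^(Suc m)
          \<and> measure (mu i) (K m) + measure (mu i) (U m) = measure (mu i) S / 2) \<and>
       c \<le> measure \<nu> (K m) + measure \<nu> (U m) \<and> measure \<nu> (K m) + measure \<nu> (W m) \<le> c" for m
      using invm[of m] unfolding inv_def by auto
    define Ki where "Ki = (\<Union>m. K m)"
    define Ui where "Ui = (\<Inter>m. U m)"
    have incK: "incseq K" by (rule incseq_SucI) (rule monoK)
    have decU: "decseq U" by (rule decseq_SucI) (rule monoU)
    have KS: "K m \<subseteq> S" "K m \<in> sets M" for m using invs[of m] by blast+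
    have Ki: "Ki \<in> sets M" "Ki \<subseteq> S" using KS unfolding Ki_def by auto
    have US: "U m \<subseteq> S" "U m \<in> sets M" for m using invs[of m] by blast+
    have Ui: "Ui \<in> sets M" "Ui \<subseteq> S" using US unfolding Ui_def by (auto, blast)
    have disj: "Ki \<inter> Ui = {}" using invs unfolding Ki_def Ui_def by blast
    have limK: "(\<lambda>m. measure N (K m)) \<longlonglongrightarrow> measure N Ki" if "finite_measure N" "sets N = sets M" for N
      unfolding Ki_def using that invs incK by (intro finite_measure.finite_Lim_measure_incseq) auto
    have limU: "(\<lambda>m. measure N (U m)) \<longlonglongrightarrow> measure N Ui" if "finite_measure N" "sets N = sets M" for N
      unfolding Ui_def using that invs decU by (intro finite_measure.finite_Lim_measure_decseq) auto
    have nuK: "measure \<nu> Ki \<le> c"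
    proof (rule LIMSEQ_le_const2[OF limK[OF \<nu>(2,1)]])
      have "measure \<nu> (K n) \<le> c" for n using invs[of n] measure_nonneg[of \<nu> "W n"] by linarith
      then show "\<exists>N. \<forall>n\<ge>N. measure \<nu> (K n) \<le> c" by blast
    qed
    have nuKU: "c \<le> measure \<nu> Ki + measure \<nu> Ui"
      by (rule LIMSEQ_le_const[OF tendsto_add[OF limK[OF \<nu>(2,1)] limU[OF \<nu>(2,1)]]]) (use invs in auto)
    obtain Z where Z: "Z \<in> sets M" "Z \<subseteq> Ui" "measure \<nu> Z = c - measure \<nu> Ki"
      using sierpinski[OF \<nu>(2,3), of Ui "c - measure \<nu> Ki"] Ui \<nu>(1) nuK nuKU by auto
    define A where "A = Ki \<union> Z"
    have KZ: "Ki \<inter> Z = {}" using disj Z by auto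
    have "A \<in> sets M" "A \<subseteq> S" using Ki Z Ui unfolding A_def by auto
    moreover have "measure \<nu> A = measure \<nu> S / 2"
      unfolding A_def using fm_add[OF \<nu>(2,1) Ki(1) Z(1) KZ] Z c_def by simp
    moreover have "measure (mu i) A = measure (mu i) S / 2" if i: "i \<in> I" for i
    proof -
      have z0: "(\<lambda>m. measure (mu i) S / 2^(Suc m)) \<longlonglongrightarrow> 0"
        using LIMSEQ_divide_realpow_zero[of 2 "measure (mu i) S / 2"] by simp
      have "(\<lambda>m. measure (mu i) S / 2 - measure (mu i) S / 2^(Suc m)) \<longlonglongrightarrow> measure (mu i) S / 2 - 0"
        by (intro tendsto_intros z0)
      moreover have "(\<lambda>m. measure (mu i) (K m)) = (\<lambda>m. measure (mu i) S / 2 - measure (mu i) S / 2^(Suc m))"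
      proof
        fix m
        have "measure (mu i) (U m) = measure (mu i) S / 2^(Suc m)"
          "measure (mu i) (K m) + measure (mu i) (U m) = measure (mu i) S / 2" using invs[of m] i by auto
        then show "measure (mu i) (K m) = measure (mu i) S / 2 - measure (mu i) S / 2^(Suc m)" by linarith
      qed
      ultimately have mK: "measure (mu i) Ki = measure (mu i) S / 2"
        using limK[OF mI(2,1)[OF i]] LIMSEQ_unique by fastforce
      have "measure (mu i) Ui \<le> 0"
      proof (rule LIMSEQ_le_const[OF z0])
        show "\<exists>N. \<forall>n\<ge>N. measure (mu i) Ui \<le> measure (mu i) S / 2 ^ Suc n"
          using invs i fm_mono[OF mI(2,1)[OF i]] unfolding Ui_def by (metis INT_lower UNIV_I)
      qed
      then have "measure (mu i) Z = 0" using fm_mono[OF mI(2,1)[OF i] Ui(1) Z(2)] measure_nonneg[of "mu i" Z] by linarith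
      then show ?thesis unfolding A_def using fm_add[OF mI(2,1)[OF i] Ki(1) Z(1) KZ] mK by simp
    qed
    ultimately show "\<exists>A\<in>sets M. A \<subseteq> S \<and> (\<forall>i\<in>insert j I. measure (mu i) A = measure (mu i) S / 2)"
      unfolding \<nu>_def by blast
  qed
qed



lemma dyadic:
  assumes pb: "\<forall>S\<in>sets M. \<exists>A\<in>sets M. A \<subseteq> S \<and> (\<forall>i\<in>I. measure (mu i) A = measure (mu i) S / 2)"
    and mI: "\<And>i. i\<in>I \<Longrightarrow> sets (mu i) = sets M \<and> finite_measure (mu i)"
  shows "S \<in> sets M \<Longrightarrow> \<exists>P. (\<forall>j<2^m. P j \<in> sets M \<and> P j \<subseteq> S) \<and> disjoint_family_on P {..<2^m}
     \<and> (\<forall>i\<in>I. \<forall>j<(2::nat)^m. measure (mu i) (P j) = measure (mu i) S / 2^m)"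
proof (induction m arbitrary: S)
  case 0 then show ?case by (intro exI[of _ "\<lambda>_. S"]) (auto simp: disjoint_family_on_def)
next
  case (Suc m)
  obtain A where A: "A\<in>sets M" "A \<subseteq> S" "\<forall>i\<in>I. measure (mu i) A = measure (mu i) S / 2"
    using pb Suc.prems by blast
  have B1: "S - A \<in> sets M" using A Suc.prems by auto
  have B2: "\<forall>i\<in>I. measure (mu i) (S - A) = measure (mu i) S / 2"
  proof
    fix i assume i: "i \<in> I"
    have "measure (mu i) (S - A) = measure (mu i) S - measure (mu i) A"
      using mI[OF i] Suc.prems A by (intro fm_diff) auto
    then show "measure (mu i) (S - A) = measure (mu i) S / 2" using A(3) i by simp
  qed
  obtain P1 where P1a: "(\<forall>j<2^m. P1 j \<in> sets M \<and> P1 j \<subseteq> A) \<and> disjoint_family_on P1 {..<2^m}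
     \<and> (\<forall>i\<in>I. \<forall>j<(2::nat)^m. measure (mu i) (P1 j) = measure (mu i) A / 2^m)" using Suc.IH[OF A(1)] by (elim exE) (rule that)
  note P1 = P1a[THEN conjunct1] P1a[THEN conjunct2, THEN conjunct1] P1a[THEN conjunct2, THEN conjunct2]
  obtain P2 where P2a: "(\<forall>j<2^m. P2 j \<in> sets M \<and> P2 j \<subseteq> S - A) \<and> disjoint_family_on P2 {..<2^m}
     \<and> (\<forall>i\<in>I. \<forall>j<(2::nat)^m. measure (mu i) (P2 j) = measure (mu i) (S - A) / 2^m)" using Suc.IH[OF B1] by (elim exE) (rule that)
  note P2 = P2a[THEN conjunct1] P2a[THEN conjunct2, THEN conjunct1] P2a[THEN conjunct2, THEN conjunct2]
  define P where "P j = (if j < 2^m then P1 j else P2 (j - 2^m))" for j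
  have idx: "j - 2^m < 2^m" if "j < 2^Suc m" "\<not> j < 2^m" for j :: nat using that by simp
  have "\<forall>j<2^Suc m. P j \<in> sets M \<and> P j \<subseteq> S"
  proof (intro allI impI)
    fix j :: nat assume j: "j < 2^Suc m"
    show "P j \<in> sets M \<and> P j \<subseteq> S"
    proof (cases "j < 2^m")
      case True then show ?thesis using P1(1) A(2) unfolding P_def by auto
    next
      case False then show ?thesis using P2(1) idx[OF j False] unfolding P_def by auto
    qed
  qed
  moreover have "disjoint_family_on P {..<2^Suc m}"
    unfolding disjoint_family_on_def
  proof (intro ballI impI)
    fix a b :: nat assume ab: "a \<in> {..<2 ^ Suc m}" "b \<in> {..<2 ^ Suc m}" "a \<noteq> b"
    show "P a \<inter> P b = {}"
    proof (cases "a < 2^m"; cases "b < 2^m")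
      assume "a < 2^m" "b < 2^m" then show ?thesis using P1(2) ab unfolding P_def disjoint_family_on_def by auto
    next
      assume "a < 2^m" "\<not> b < 2^m" then show ?thesis using P1(1) P2(1) idx[of b] ab unfolding P_def by auto
    next
      assume "\<not> a < 2^m" "b < 2^m" then show ?thesis using P1(1) P2(1) idx[of a] ab unfolding P_def by auto
    next
      assume "\<not> a < 2^m" "\<not> b < 2^m"
      moreover have "a - 2^m \<noteq> b - 2^m" using ab calculation by auto
      ultimately show ?thesis using P2(2) idx[of a] idx[of b] ab unfolding P_def disjoint_family_on_def by auto
    qed
  qed
  moreover have "\<forall>i\<in>I. \<forall>j<(2::nat)^Suc m. measure (mu i) (P j) = measure (mu i) S / 2^Suc m"
  proof (intro ballI allI impI)
    fix i j assume i: "i \<in> I" and j: "j < (2::nat)^Suc m"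
    have q: "measure (mu i) S / 2 / 2^m = measure (mu i) S / 2^Suc m" by simp
    show "measure (mu i) (P j) = measure (mu i) S / 2^Suc m"
    proof (cases "j < 2^m")
      case True then show ?thesis using P1(3) A(3) i q unfolding P_def by simp
    next
      case False then show ?thesis using P2(3) B2 i q idx[OF j] unfolding P_def by simp
    qed
  qed
  ultimately show ?case by blast
qed

theorem lemma3:
  fixes M :: "'a measure" and mu :: "nat \<Rightarrow> 'a measure" and r k :: nat and S :: "'a set"
  assumes r: "r \<ge> 1"
    and sets_mu: "\<And>i. i \<in> {1..r} \<Longrightarrow> sets (mu i) = sets M"
    and fin: "\<And>i. i \<in> {1..r} \<Longrightarrow> finite_measure (mu i)"
    and na: "\<And>i. i \<in> {1..r} \<Longrightarrow> non_atomic (mu i)"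
    and S: "S \<in> sets M"
    and k: "k \<in> {1..r}"
  shows "\<exists>H \<in> sets M. H \<subseteq> S \<and>
           measure (mu k) H \<ge> (1/2) ^ (r - 1) * measure (mu k) S \<and>
           (\<exists>F :: nat \<Rightarrow> 'a set.
              (\<forall>i \<in> {1..r}. F i \<in> sets M) \<and>
              disjoint_family_on F {1..r} \<and>
              (\<Union>i \<in> {1..r}. F i) = H \<and>
              (\<forall>i \<in> {1..r}. \<forall>j \<in> {1..r}. measure (mu i) (F i) \<ge> measure (mu i) (F j)))"
proof -
  have pb: "\<forall>S\<in>sets M. \<exists>A\<in>sets M. A \<subseteq> S \<and> (\<forall>i\<in>{1..r}. measure (mu i) A = measure (mu i) S / 2)"
    by (rule PB) (use sets_mu fin na in auto)
  obtain P where P: "\<forall>j<2^(r-1). P j \<in> sets M \<and> P j \<subseteq> S" "disjoint_family_on P {..<2^(r-1)}"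
     "\<forall>i\<in>{1..r}. \<forall>j<(2::nat)^(r-1). measure (mu i) (P j) = measure (mu i) S / 2^(r-1)"
    using dyadic[OF pb _ S, of "r - 1"] sets_mu fin by blast
  define F where "F i = P (i - 1)" for i
  have idx: "i - 1 < (2::nat)^(r-1)" if "i \<in> {1..r}" for i
  proof -
    have "i - 1 \<le> r - 1" using that by auto
    also have "r - 1 < 2^(r-1)" by (rule less_exp)
    finally show ?thesis .
  qed
  have Fs: "F i \<in> sets M" "F i \<subseteq> S" if "i \<in> {1..r}" for i using P(1) idx[OF that] unfolding F_def by auto
  have Fm: "measure (mu i) (F j) = measure (mu i) S / 2^(r-1)" if "i \<in> {1..r}" "j \<in> {1..r}" for i j
    using P(3) idx[OF that(2)] that(1) unfolding F_def by auto
  have disj: "disjoint_family_on F {1..r}"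
    unfolding disjoint_family_on_def
  proof (intro ballI impI)
    fix a b assume ab: "a \<in> {1..r}" "b \<in> {1..r}" "a \<noteq> b"
    then have "a - 1 \<noteq> b - 1" by auto
    then show "F a \<inter> F b = {}" using P(2) idx[OF ab(1)] idx[OF ab(2)] unfolding F_def disjoint_family_on_def by auto
  qed
  define H where "H = (\<Union>i \<in> {1..r}. F i)"
  have H: "H \<in> sets M" "H \<subseteq> S" using Fs unfolding H_def by (auto, blast)
  have "measure (mu k) (F k) \<le> measure (mu k) H"
  proof -
    have "F k \<subseteq> H" using k unfolding H_def by blast
    then show ?thesis using fm_mono[OF fin[OF k] sets_mu[OF k] H(1)] by blast
  qed
  moreover have "measure (mu k) (F k) = (1/2) ^ (r - 1) * measure (mu k) S"
    using Fm[OF k k] by (simp add: power_one_over)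
  ultimately have Hle: "(1/2)^(r-1) * measure (mu k) S \<le> measure (mu k) H" by linarith
  have Fex: "(\<forall>i\<in>{1..r}. F i \<in> sets M) \<and> disjoint_family_on F {1..r} \<and> (\<Union>i\<in>{1..r}. F i) = H
     \<and> (\<forall>i\<in>{1..r}. \<forall>j\<in>{1..r}. measure (mu i) (F i) \<ge> measure (mu i) (F j))"
    using Fs(1) disj Fm unfolding H_def by simp
  show ?thesis using H Hle Fex by blast
qed

end
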